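(* Let $\alpha$ be a positive rational number and $v\in\widetilde V$. If $\rho_\alpha(v)=\alpha+4$, then $\alpha$ is an integer.
   Context: For real $\alpha>0$ put $t=\alpha+2$, $u_0=0$, $u_1=1$, $u_{i+2}=tu_{i+1}-u_i$; $\rho_\alpha(0)=0$ and $\rho_\alpha(n)=1+\frac{u_{n-1}}{u_n+1}$ for $n\in\mathbb{N}$. $\widetilde V$ is the set of infinite nonincreasing sequences of nonnegative integers that are eventually $0$, and $\rho_\alpha(v)=\sum_i\rho_\alpha(v_i)$. *)

theory Defs
  imports Complex_Main
begin

fun useq :: "real \<Rightarrow> nat \<Rightarrow> real" where
  "useq \<alpha> 0 = 0"
| "useq \<alpha> (Suc 0) = 1"
| "useq \<alpha> (Suc (Suc i)) = (\<alpha> + 2) * useq \<alpha> (Suc i) - useq \<alpha> i"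

definition rho :: "real \<Rightarrow> nat \<Rightarrow> real" where
  "rho \<alpha> n = (if n = 0 then 0 else 1 + useq \<alpha> (n - 1) / (useq \<alpha> n + 1))"

definition Vtilde :: "(nat \<Rightarrow> nat) set" where
  "Vtilde = {v. (\<forall>i. v (Suc i) \<le> v i) \<and> (\<exists>N. \<forall>i\<ge>N. v i = 0)}"

text \<open>rho extended to sequences: the sum over all indices (only finitely many nonzero terms).\<close>
definition rho_seq :: "real \<Rightarrow> (nat \<Rightarrow> nat) \<Rightarrow> real" where
  "rho_seq \<alpha> v = (\<Sum>i. rho \<alpha> (v i))"

end

theory Submission
  imports Defs
begin

fun cs :: "int \<Rightarrow> int \<Rightarrow> nat \<Rightarrow> int" where
  "cs P q 0 = 1"
| "cs P q (Suc 0) = P"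
| "cs P q (Suc (Suc n)) = P * cs P q (Suc n) - q^2 * cs P q n"

lemma coprime_add_mult_q:
  fixes a q k :: int
  shows "coprime (a + q * k) q \<longleftrightarrow> coprime a q"
proof -
  have "gcd q (a + k * q) = gcd q a" using gcd_add_mult[of q k a] by (simp add: add.commute)
  then show ?thesis
    by (simp add: coprime_iff_gcd_eq_1 gcd.commute mult.commute)
qed

lemma cs_coprime:
  fixes P q :: int
  assumes "coprime P q"
  shows "coprime (cs P q n) q"
proof (induction n rule: nat_less_induct)
  case (1 n)
  show ?case
  proof (cases n)
    case 0 then show ?thesis by simp
  next
    case (Suc m)
    show ?thesis
    proof (cases m)
      case 0 then show ?thesis using Suc assms by simp
    next
      case (Suc k)
      have h1: "coprime (cs P q (Suc k)) q" using 1 \<open>n = Suc m\<close> Suc by simp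
      have "coprime (P * cs P q (Suc k)) q" using h1 assms by simp
      then have "coprime (P * cs P q (Suc k) + q * (- (q * cs P q k))) q"
        using coprime_add_mult_q by blast
      then show ?thesis using \<open>n = Suc m\<close> Suc by (simp add: power2_eq_square algebra_simps)
    qed
  qed
qed

lemma useq_cs:
  fixes p q :: int
  assumes "q > 0" and "\<alpha> = of_int p / of_int q"
  shows "useq \<alpha> (Suc n) = of_int (cs (p + 2*q) q n) / of_int q ^ n
       \<and> useq \<alpha> (Suc (Suc n)) = of_int (cs (p + 2*q) q (Suc n)) / of_int q ^ (Suc n)"
proof (induction n)
  case 0
  then show ?case using assms by (simp add: field_simps)
next
  case (Suc n)
  have qn: "(of_int q :: real) \<noteq> 0" using assms by simp
  obtain I1 I2 where I1: "useq \<alpha> (Suc n) = of_int (cs (p + 2*q) q n) / of_int q ^ n"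
    and I2: "useq \<alpha> (Suc (Suc n)) = of_int (cs (p + 2*q) q (Suc n)) / of_int q ^ (Suc n)"
    using Suc.IH by blast
  have "useq \<alpha> (Suc (Suc (Suc n))) = (\<alpha> + 2) * useq \<alpha> (Suc (Suc n)) - useq \<alpha> (Suc n)"
    by (simp only: useq.simps)
  also have "\<dots> = (\<alpha> + 2) * (of_int (cs (p + 2*q) q (Suc n)) / of_int q ^ (Suc n))
      - of_int (cs (p + 2*q) q n) / of_int q ^ n"
    by (simp only: I1 I2)
  also have "\<dots> = of_int (cs (p + 2*q) q (Suc (Suc n))) / of_int q ^ (Suc (Suc n))"
    using qn by (simp add: assms(2) field_simps power2_eq_square)
  finally show ?case using I2 by blast
qed

definition G :: "int \<Rightarrow> real \<Rightarrow> bool" where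
  "G q x = (\<exists>z c d :: int. coprime d q \<and> x = of_int z + of_int q * of_int c / of_int d)"

lemma G_add:
  assumes "q > 1" "G q x" "G q y"
  shows "G q (x + y)"
proof -
  obtain z1 c1 d1 where 1: "coprime d1 q" "x = of_int z1 + of_int q * of_int c1 / of_int d1"
    using assms(2) unfolding G_def by blast
  obtain z2 c2 d2 where 2: "coprime d2 q" "y = of_int z2 + of_int q * of_int c2 / of_int d2"
    using assms(3) unfolding G_def by blast
  have "d1 \<noteq> 0" using 1(1) assms(1) by (auto simp: coprime_iff_gcd_eq_1)
  moreover have "d2 \<noteq> 0" using 2(1) assms(1) by (auto simp: coprime_iff_gcd_eq_1)
  ultimately have "x + y = of_int (z1 + z2) + of_int q * of_int (c1 * d2 + c2 * d1) / of_int (d1 * d2)"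
    unfolding 1(2) 2(2) by (simp add: field_simps)
  moreover have "coprime (d1 * d2) q" using 1 2 by simp
  ultimately show ?thesis unfolding G_def by blast
qed

lemma G_sum:
  assumes "q > 1" "\<And>i. i \<in> A \<Longrightarrow> G q (f i)" "finite A"
  shows "G q (sum f A)"
  using assms(3,2)
proof (induction A rule: finite_induct)
  case empty
  have "(0::real) = of_int 0 + of_int q * of_int 0 / of_int 1" by simp
  then show ?case unfolding G_def by (simp, metis coprime_1_left of_int_0 of_int_1)
next
  case (insert x F)
  then show ?case using G_add[OF assms(1)] by simp
qed

lemma G_rho:
  fixes p q :: int
  assumes "q > 1" "coprime p q" "\<alpha> = of_int p / of_int q"
  shows "G q (rho \<alpha> n)"
proof -
  have cP: "coprime (p + 2 * q) q"
    using coprime_add_mult_q[of p q 2] assms(2) by (simp add: mult.commute)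
  consider "n = 0" | "n = Suc 0" | m where "n = Suc (Suc m)"
    by (metis not0_implies_Suc)
  then show ?thesis
  proof cases
    case 1
    have "rho \<alpha> n = of_int 0 + of_int q * of_int 0 / of_int 1" using 1 by (simp add: rho_def)
    then show ?thesis unfolding G_def by (metis coprime_1_left)
  next
    case 2
    have "rho \<alpha> n = of_int 1 + of_int q * of_int 0 / of_int 1" using 2 by (simp add: rho_def)
    then show ?thesis unfolding G_def by (metis coprime_1_left)
  next
    case 3
    define C where "C = cs (p + 2*q) q m"
    define D where "D = cs (p + 2*q) q (Suc m)"
    have U: "useq \<alpha> (Suc m) = of_int C / of_int q ^ m"
            "useq \<alpha> (Suc (Suc m)) = of_int D / of_int q ^ Suc m"
      using useq_cs[of q \<alpha> p m] assms unfolding C_def D_def by auto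
    have cd: "coprime (D + q * q ^ m) q"
      using coprime_add_mult_q[of D q "q^m"] cs_coprime[OF cP] unfolding D_def by simp
    have dnz: "D + q * q ^ m \<noteq> 0"
      using cd assms(1) by (auto simp: coprime_iff_gcd_eq_1)
    have dnz': "(of_int D + of_int q * of_int q ^ m :: real) \<noteq> 0"
      using dnz by (metis of_int_0 of_int_add of_int_mult of_int_power of_int_eq_iff)
    have qnz: "(of_int q :: real) \<noteq> 0" using assms(1) by simp
    have "rho \<alpha> n = 1 + useq \<alpha> (Suc m) / (useq \<alpha> (Suc (Suc m)) + 1)"
      using 3 by (simp add: rho_def)
    also have "\<dots> = 1 + (of_int C / of_int q ^ m) / (of_int D / of_int q ^ Suc m + 1)"
      by (simp only: U)
    also have "\<dots> = of_int 1 + of_int q * of_int C / of_int (D + q * q ^ m)"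
      using qnz dnz' by (simp add: field_simps)
    finally show ?thesis unfolding G_def using cd by blast
  qed
qed

theorem proposition4:
  fixes \<alpha> :: real and v :: "nat \<Rightarrow> nat"
  assumes "\<alpha> \<in> \<rat>" and "\<alpha> > 0" and "v \<in> Vtilde"
    and "rho_seq \<alpha> v = \<alpha> + 4"
  shows "\<alpha> \<in> \<int>"
proof -
  obtain p q :: int where pq: "q > 0" "coprime p q" "\<alpha> = of_int p / of_int q"
    using Rats_cases'[OF assms(1)] by blast
  show ?thesis
  proof (cases "q = 1")
    case True
    then show ?thesis using pq by simp
  next
    case False
    then have q1: "q > 1" using pq by simp
    obtain N where N: "\<forall>i\<ge>N. v i = 0" using assms(3) unfolding Vtilde_def by blast
    have "rho_seq \<alpha> v = (\<Sum>i\<in>{..<N}. rho \<alpha> (v i))"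
      unfolding rho_seq_def
      by (rule suminf_finite) (use N in \<open>auto simp: rho_def\<close>)
    then have "G q (\<alpha> + 4)" using G_sum[OF q1, of "{..<N}" "\<lambda>i. rho \<alpha> (v i)"]
        G_rho[OF q1 pq(2,3)] assms(4) by simp
    then obtain z c d :: int where zcd: "coprime d q"
      "\<alpha> + 4 = of_int z + of_int q * of_int c / of_int d"
      unfolding G_def by blast
    have dnz: "d \<noteq> 0" using zcd(1) q1 by (auto simp: coprime_iff_gcd_eq_1)
    have "(of_int p / of_int q + 4 :: real) = of_int z + of_int q * of_int c / of_int d"
      using zcd(2) pq(3) by simp
    then have "(of_int (p * d) :: real) = of_int (q * ((z - 4) * d + q * c))"
      using dnz pq(1) by (simp add: field_simps)
    then have "p * d = q * ((z - 4) * d + q * c)" by (simp only: of_int_eq_iff)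
    then have "q dvd p * d" by simp
    then have "q dvd p" using zcd(1) by (simp add: coprime_commute coprime_dvd_mult_left_iff)
    then have "is_unit q" using pq(2) by (meson coprime_common_divisor dvd_refl)
    then show ?thesis using q1 by simp
  qed
qed

end
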